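(* Let $C\subset\mathbb{R}^d$ be a nonempty closed convex set, let $f(x)=\mathbb{E}_\xi[f(x,\xi)]$ where each $f(\cdot,\xi)$ is convex and $G$-Lipschitz, and let $x_*\in\arg\min_{x\in C}f(x)$. Let $\xi_0,\xi_1,\dots$ be i.i.d. samples, $c_k\in(0,1]$ and $\eta_k>0$ for $k\ge0$. Consider the projected SGDM iterates: $x_0\in C$, $z_0=x_0$, $z_{k+1}=\Pi_C(z_k-\eta_k\nabla f(x_k,\xi_k))$ for $k\ge 0$ and $x_k=(1-c_k)x_{k-1}+c_kz_k$ for $k\ge1$. Define, for $k\ge1$, $$A_k=\|z_k-x_*\|^2+\frac{2}{c_{k-1}}\eta_{k-1}\left[f(x_{k-1})-f(x_* )\right].$$ Suppose that $\left(\frac{1}{c_k}-1\right)\eta_k\le\frac{1}{c_{k-1}}\eta_{k-1}$ for all $k\ge2$ and $\left(\frac{1}{c_1}-1\right)\eta_1\le 0$. Then for every $k\ge1$, $$\mathbb{E}_{\xi_k}\left[A_{k+1}\right]\le A_k+\eta_k^2G^2,$$ where $\mathbb{E}_{\xi_k}$ denotes expectation with respect to $\xi_k$ conditional on $\xi_0,\dots,\xi_{k-1}$.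
   Context: $\Pi_C$ is the Euclidean projection onto $C$; $\nabla f(x,\xi)$ is a subgradient of $f(\cdot,\xi)$ at $x$. *)

theory Defs
  imports "HOL-Probability.Probability"
begin

definition is_subgradient :: "('a::real_inner \<Rightarrow> real) \<Rightarrow> 'a \<Rightarrow> 'a \<Rightarrow> bool" where
  "is_subgradient h x v \<longleftrightarrow> (\<forall>y. h y \<ge> h x + inner v (y - x))"

text \<open>Projected SGD with momentum. Given the sample path xi, returns (x_k, z_k).
  Pi_C is the Euclidean projection closest_point C; g x s is the stochastic subgradient.\<close>
fun sgdm :: "'a::euclidean_space set \<Rightarrow> ('a \<Rightarrow> 'b \<Rightarrow> 'a) \<Rightarrow> 'a \<Rightarrow> (nat \<Rightarrow> real) \<Rightarrow> (nat \<Rightarrow> real)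
             \<Rightarrow> (nat \<Rightarrow> 'b) \<Rightarrow> nat \<Rightarrow> 'a \<times> 'a" where
  "sgdm C g x0 \<eta> c \<xi> 0 = (x0, x0)"
| "sgdm C g x0 \<eta> c \<xi> (Suc k) =
     (let xk = fst (sgdm C g x0 \<eta> c \<xi> k); zk = snd (sgdm C g x0 \<eta> c \<xi> k);
          z' = closest_point C (zk - \<eta> k *\<^sub>R g xk (\<xi> k))
      in ((1 - c (Suc k)) *\<^sub>R xk + c (Suc k) *\<^sub>R z', z'))"

definition sgdm_A :: "'a::euclidean_space set \<Rightarrow> ('a \<Rightarrow> 'b \<Rightarrow> 'a) \<Rightarrow> ('a \<Rightarrow> real) \<Rightarrow> 'a \<Rightarrow> 'a
     \<Rightarrow> (nat \<Rightarrow> real) \<Rightarrow> (nat \<Rightarrow> real) \<Rightarrow> (nat \<Rightarrow> 'b) \<Rightarrow> nat \<Rightarrow> real" where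
  "sgdm_A C g F x0 xs \<eta> c \<xi> k =
     (norm (snd (sgdm C g x0 \<eta> c \<xi> k) - xs))\<^sup>2
     + 2 / c (k - 1) * \<eta> (k - 1) * (F (fst (sgdm C g x0 \<eta> c \<xi> (k - 1))) - F xs)"

end

theory Submission
  imports Defs
begin


lemma sgdm_local:
  assumes "\<And>i. i < j \<Longrightarrow> \<xi>' i = \<xi> i"
  shows "sgdm C g x0 \<eta> c \<xi>' j = sgdm C g x0 \<eta> c \<xi> j"
  using assms by (induction j) (auto simp: Let_def)

lemma sgdm_in_C:
  assumes C: "closed C" "convex C" "C \<noteq> {}" and x0: "x0 \<in> C"
    and c: "\<And>j. 0 < c j \<and> c j \<le> 1"
  shows "fst (sgdm C g x0 \<eta> c \<xi> j) \<in> C \<and> snd (sgdm C g x0 \<eta> c \<xi> j) \<in> C"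
proof (induction j)
  case 0 then show ?case using x0 by simp
next
  case (Suc j)
  let ?z = "closest_point C (snd (sgdm C g x0 \<eta> c \<xi> j) - \<eta> j *\<^sub>R g (fst (sgdm C g x0 \<eta> c \<xi> j)) (\<xi> j))"
  have z: "?z \<in> C" using C by (simp add: closest_point_in_set)
  have "(1 - c (Suc j)) *\<^sub>R fst (sgdm C g x0 \<eta> c \<xi> j) + c (Suc j) *\<^sub>R ?z \<in> C"
    using convexD[OF C(2) _ z, of "fst (sgdm C g x0 \<eta> c \<xi> j)" "1 - c (Suc j)" "c (Suc j)"] Suc c[of "Suc j"]
    by auto
  then show ?case using z by (simp add: Let_def)
qed

lemma subgrad_norm:
  fixes h :: "'a::real_inner \<Rightarrow> real"
  assumes "G-lipschitz_on UNIV h" "\<forall>y. h y \<ge> h x + inner v (y - x)"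
  shows "norm v \<le> G"
proof -
  have G: "G \<ge> 0" "dist (h (x + v)) (h x) \<le> G * dist (x + v) x"
    using assms(1) by (auto simp: lipschitz_on_def)
  have "h (x + v) \<ge> h x + inner v v" using assms(2)[rule_format, of "x+v"] by simp
  hence "(norm v)^2 \<le> G * norm v" using G by (simp add: dist_norm power2_norm_eq_inner)
  thus ?thesis using G by (cases "norm v = 0") (auto simp: power2_eq_square)
qed



theorem corollary16:
  fixes C :: "'a::euclidean_space set"
    and M :: "'b measure"
    and f :: "'a \<Rightarrow> 'b \<Rightarrow> real"
    and g :: "'a \<Rightarrow> 'b \<Rightarrow> 'a"
    and G :: real and x0 xs :: 'a
    and \<eta> c :: "nat \<Rightarrow> real"
    and \<xi> :: "nat \<Rightarrow> 'b"
    and k :: nat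
  assumes P: "prob_space M"
    and C: "closed C" "convex C" "C \<noteq> {}"
    and fint: "\<And>x. integrable M (f x)"
    and gmeas: "\<And>x. g x \<in> borel_measurable M"
    and fconv: "\<And>s. s \<in> space M \<Longrightarrow> convex_on UNIV (\<lambda>x. f x s)"
    and flip: "\<And>s. s \<in> space M \<Longrightarrow> G-lipschitz_on UNIV (\<lambda>x. f x s)"
    and gsub: "\<And>x s. s \<in> space M \<Longrightarrow> is_subgradient (\<lambda>y. f y s) x (g x s)"
    and xs: "xs \<in> C" "\<And>x. x \<in> C \<Longrightarrow> (\<integral>s. f xs s \<partial>M) \<le> (\<integral>s. f x s \<partial>M)"
    and x0: "x0 \<in> C"
    and c: "\<And>j. 0 < c j \<and> c j \<le> 1"
    and eta: "\<And>j. 0 < \<eta> j"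
    and step: "\<And>j. 2 \<le> j \<Longrightarrow> (1 / c j - 1) * \<eta> j \<le> \<eta> (j - 1) / c (j - 1)"
    and step1: "(1 / c 1 - 1) * \<eta> 1 \<le> 0"
    and samples: "\<And>i. \<xi> i \<in> space M"
    and k: "1 \<le> k"
  shows "(\<integral>s. sgdm_A C g (\<lambda>x. \<integral>t. f x t \<partial>M) x0 xs \<eta> c (\<xi>(k := s)) (Suc k) \<partial>M)
         \<le> sgdm_A C g (\<lambda>x. \<integral>t. f x t \<partial>M) x0 xs \<eta> c \<xi> k + (\<eta> k)\<^sup>2 * G\<^sup>2"
  proof -
  interpret prob_space M by (rule P)
  obtain m where km: "k = Suc m" using k by (cases k) auto
  define F where "F = (\<lambda>x. \<integral>t. f x t \<partial>M)"
  define X where "X = (\<lambda>j. fst (sgdm C g x0 \<eta> c \<xi> j))"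
  define Z where "Z = (\<lambda>j. snd (sgdm C g x0 \<eta> c \<xi> j))"
  define K where "K = 2 / c k * \<eta> k * (F (X k) - F xs)"
  have inC: "X j \<in> C" "Z j \<in> C" for j
    using sgdm_in_C[OF C x0, where c=c, OF c] unfolding X_def Z_def by auto
  have Fge: "F (X j) \<ge> F xs" for j using xs(2)[OF inC(1)] unfolding F_def by simp
  have loc: "sgdm C g x0 \<eta> c (\<xi>(k := s)) k = sgdm C g x0 \<eta> c \<xi> k" for s
    by (rule sgdm_local) auto
  have hform: "sgdm_A C g F x0 xs \<eta> c (\<xi>(k := s)) (Suc k)
     = (norm (closest_point C (Z k - \<eta> k *\<^sub>R g (X k) s) - xs))\<^sup>2 + K" for s
    unfolding sgdm_A_def K_def X_def Z_def using loc[of s] by (simp add: Let_def)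
  have Ak: "sgdm_A C g F x0 xs \<eta> c \<xi> k = (norm (Z k - xs))\<^sup>2 + 2 / c m * \<eta> m * (F (X m) - F xs)"
    unfolding sgdm_A_def X_def Z_def km by simp
  have Xk: "X k = (1 - c k) *\<^sub>R X m + c k *\<^sub>R Z k"
    unfolding X_def Z_def km by (simp add: Let_def)
  have ck: "0 < c k" "c k \<le> 1" using c by auto
  have ZX: "Z k - X k = (1 / c k - 1) *\<^sub>R (X k - X m)"
  proof -
    have "c k *\<^sub>R (Z k - X k) = (1 - c k) *\<^sub>R (X k - X m)" using Xk by (simp add: algebra_simps)
    also have "\<dots> = c k *\<^sub>R ((1 / c k - 1) *\<^sub>R (X k - X m))"
    proof -
      have "c k * (1 / c k - 1) = 1 - c k" using ck by (simp add: field_simps)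
      thus ?thesis by (simp only: scaleR_scaleR)
    qed
    finally have "c k *\<^sub>R (Z k - X k) = c k *\<^sub>R ((1 / c k - 1) *\<^sub>R (X k - X m))" .
    thus ?thesis using ck by (metis scaleR_cancel_left less_irrefl)
  qed
  define u where "u = (\<lambda>s. (norm (Z k - xs))\<^sup>2 - 2 * \<eta> k * ((1 / c k - 1) * (f (X k) s - f (X m) s) + f (X k) s - f xs s) + (\<eta> k)\<^sup>2 * G\<^sup>2 + K)"
  have Kge: "K \<ge> 0" unfolding K_def using ck eta[of k] Fge[of k] by simp
  have pw: "(norm (closest_point C (Z k - \<eta> k *\<^sub>R g (X k) s) - xs))\<^sup>2 + K \<le> u s" if s: "s \<in> space M" for s
  proof -
    let ?g = "g (X k) s"
    have gn: "norm ?g \<le> G" using subgrad_norm[OF flip[OF s]] gsub[OF s] unfolding is_subgradient_def by blast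
    have b: "f xs s \<ge> f (X k) s + inner ?g (xs - X k)" using gsub[OF s] unfolding is_subgradient_def by blast
    have cc: "f (X m) s \<ge> f (X k) s + inner ?g (X m - X k)" using gsub[OF s] unfolding is_subgradient_def by blast
    have a1: "1 / c k - 1 \<ge> 0" using ck by simp
    have ip: "inner ?g (Z k - xs) = (1 / c k - 1) * inner ?g (X k - X m) + inner ?g (X k - xs)"
    proof -
      have "Z k - xs = (Z k - X k) + (X k - xs)" by simp
      thus ?thesis unfolding ZX by (simp only: inner_add_right inner_scaleR_right)
    qed
    have i1: "inner ?g (X k - X m) \<ge> f (X k) s - f (X m) s"
      using cc by (simp add: inner_diff_right)
    have i2: "inner ?g (X k - xs) \<ge> f (X k) s - f xs s"
      using b by (simp add: inner_diff_right)
    have lb: "inner ?g (Z k - xs) \<ge> (1 / c k - 1) * (f (X k) s - f (X m) s) + f (X k) s - f xs s"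
      using ip mult_left_mono[OF i1 a1] i2 by linarith
    have np: "norm (closest_point C (Z k - \<eta> k *\<^sub>R ?g) - xs) \<le> norm (Z k - \<eta> k *\<^sub>R ?g - xs)"
      using closest_point_lipschitz[OF C(2,1,3), of "Z k - \<eta> k *\<^sub>R ?g" xs] closest_point_self[OF xs(1)]
      by (simp add: dist_norm)
    have exp: "(norm (Z k - \<eta> k *\<^sub>R ?g - xs))\<^sup>2 = (norm (Z k - xs))\<^sup>2 - 2 * \<eta> k * inner ?g (Z k - xs) + (\<eta> k)\<^sup>2 * (norm ?g)\<^sup>2"
    proof -
      have "Z k - \<eta> k *\<^sub>R ?g - xs = (Z k - xs) - \<eta> k *\<^sub>R ?g" by simp
      thus ?thesis by (simp only: power2_norm_eq_inner inner_diff_left inner_diff_right inner_scaleR_left inner_scaleR_right inner_commute[of "Z k - xs" ?g]) (simp add: algebra_simps power2_eq_square inner_commute)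
    qed
    have gG: "(norm ?g)\<^sup>2 \<le> G\<^sup>2" using gn by (simp add: power_mono)
    have "(norm (closest_point C (Z k - \<eta> k *\<^sub>R ?g) - xs))\<^sup>2 \<le> (norm (Z k - \<eta> k *\<^sub>R ?g - xs))\<^sup>2"
      using np by (simp add: power_mono)
    also have "\<dots> \<le> u s - K"
    proof -
      have m1: "2 * \<eta> k * ((1 / c k - 1) * (f (X k) s - f (X m) s) + f (X k) s - f xs s) \<le> 2 * \<eta> k * inner ?g (Z k - xs)"
        using mult_left_mono[OF lb, of "2 * \<eta> k"] eta[of k] by simp
      have m2: "(\<eta> k)\<^sup>2 * (norm ?g)\<^sup>2 \<le> (\<eta> k)\<^sup>2 * G\<^sup>2"
        using mult_left_mono[OF gG, of "(\<eta> k)\<^sup>2"] by simp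
      show ?thesis unfolding exp u_def using m1 m2 by linarith
    qed
    finally show ?thesis by simp
  qed
  have uint: "integrable M u" unfolding u_def using fint by simp
  have Iu: "(\<integral>s. u s \<partial>M) = (norm (Z k - xs))\<^sup>2 - 2 * \<eta> k * ((1 / c k - 1) * (F (X k) - F (X m)) + F (X k) - F xs) + (\<eta> k)\<^sup>2 * G\<^sup>2 + K"
    unfolding u_def F_def using fint by (simp add: algebra_simps prob_space)
  have hle: "(\<integral>s. sgdm_A C g F x0 xs \<eta> c (\<xi>(k := s)) (Suc k) \<partial>M) \<le> (\<integral>s. u s \<partial>M)"
    unfolding hform
  proof (rule integral_mono'[OF uint pw])
    fix s assume s: "s \<in> space M"
    have "0 \<le> (norm (closest_point C (Z k - \<eta> k *\<^sub>R g (X k) s) - xs))\<^sup>2 + K" using Kge by simp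
    thus "0 \<le> u s" using pw[OF s] by linarith
  qed
  have stp: "(1 / c k - 1) * \<eta> k \<le> \<eta> m / c m"
  proof (cases m)
    case 0
    have "0 \<le> \<eta> 0 / c 0" using c[of 0] eta[of 0] by simp
    thus ?thesis using step1 km 0 by simp
  next
    case (Suc n)
    thus ?thesis using step[of k] km by simp
  qed
  have "(\<integral>s. u s \<partial>M) \<le> sgdm_A C g F x0 xs \<eta> c \<xi> k + (\<eta> k)\<^sup>2 * G\<^sup>2"
  proof -
    have D: "F (X m) - F xs \<ge> 0" using Fge[of m] by simp
    have e: "(\<integral>s. u s \<partial>M) = (norm (Z k - xs))\<^sup>2 + (\<eta> k)\<^sup>2 * G\<^sup>2 + 2 * ((1 / c k - 1) * \<eta> k) * (F (X m) - F xs)"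
      unfolding Iu K_def using ck by (simp add: field_simps)
    show ?thesis unfolding e Ak using mult_right_mono[OF stp D] by simp
  qed
  with hle show ?thesis unfolding F_def by simp
qed

end
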